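(* Let $n\ge 1$ and $\bar\gamma=(\gamma_1,\dots,\gamma_n)\in\mathbb{N}^n$. Let $s_1,\dots,s_n$ be i.i.d. random variables with $\Pr[s_i=k]=2^{-(k+1)}$ for $k=0,1,2,\dots$, and let $A(\bar\gamma)$ be the event that the closed intervals $[s_i,s_i+\gamma_i]$, $i=1,\dots,n$, are pairwise disjoint. Then $$\Pr[A(\bar\gamma)]=\frac{2^{-\left(\binom{n+1}{2}-1\right)}}{\prod_{i=1}^{n-1}\left(1-2^{-(n+1-i)}\right)}\sum_{\sigma\in \mathrm{Sym}_n}\prod_{i=1}^{n-1}2^{-(n-i)\gamma_{\sigma(i)}},$$ where $\mathrm{Sym}_n$ is the set of all permutations of $\{1,\dots,n\}$.
   Context: $\mathbb{N}=\{0,1,2,\dots\}$. *)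

theory Defs
  imports "HOL-Probability.Probability" "HOL-Combinatorics.Permutations"
begin

definition iid_geom :: "nat \<Rightarrow> (nat \<Rightarrow> nat) pmf" where
  "iid_geom n = Pi_pmf {1..n} 0 (\<lambda>_. geometric_pmf (1/2))"

definition event_A :: "nat \<Rightarrow> (nat \<Rightarrow> nat) \<Rightarrow> (nat \<Rightarrow> nat) set" where
  "event_A n \<gamma> = {s. \<forall>i\<in>{1..n}. \<forall>j\<in>{1..n}. i \<noteq> j \<longrightarrow>
      {real (s i)..real (s i) + real (\<gamma> i)} \<inter> {real (s j)..real (s j) + real (\<gamma> j)} = {}}"

end

theory Submission
  imports Defs "HOL-Combinatorics.Multiset_Permutations"
begin

abbreviation "geo \<equiv> geometric_pmf (1/2::real)"
definition "DD I = Pi_pmf I 0 (\<lambda>_. geo)"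
definition "supp I = {f::nat\<Rightarrow>nat. \<forall>x. x \<notin> I \<longrightarrow> f x = 0}"

lemma pmf_geo: "pmf geo k = (1/2::real)^(k+1)"
  by simp

lemma pmf_DD: "finite I \<Longrightarrow> pmf (DD I) f = (if f \<in> supp I then \<Prod>x\<in>I. (1/2::real)^(f x + 1) else 0)"
  unfolding DD_def supp_def by (auto simp: pmf_Pi)

lemma measure_DD_supp: "finite I \<Longrightarrow> measure (DD I) X = measure (DD I) (X \<inter> supp I)"
  by (rule measure_prob_cong_0) (auto simp: pmf_DD)

definition "HH j A a c t = (\<lambda>i. if i = j then a else if i \<in> A then t i + c else (0::nat))"

lemma inj_HH: "j \<notin> A \<Longrightarrow> inj_on (HH j A a c) (supp A)"
proof
  fix s t assume j: "j \<notin> A" and s: "s \<in> supp A" and t: "t \<in> supp A" and e: "HH j A a c s = HH j A a c t"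
  show "s = t"
  proof
    fix i show "s i = t i"
    proof (cases "i \<in> A")
      case True
      then have "i \<noteq> j" using j by auto
      have "HH j A a c s i = HH j A a c t i" using e by simp
      then show ?thesis using True \<open>i \<noteq> j\<close> by (simp add: HH_def)
    next
      case False then show ?thesis using s t by (auto simp: supp_def)
    qed
  qed
qed

lemma pmf_DD_HH:
  assumes fin: "finite A" and j: "j \<notin> A" and t: "t \<in> supp A"
  shows "pmf (DD (insert j A)) (HH j A a c t) = (1/2::real)^(a+1) * (1/2)^(card A * c) * pmf (DD A) t"
proof -
  have s: "HH j A a c t \<in> supp (insert j A)" by (auto simp: HH_def supp_def)
  have "(\<Prod>x\<in>A. (1/2::real)^(HH j A a c t x + 1)) = (\<Prod>x\<in>A. (1/2)^c * (1/2)^(t x + 1))"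
    by (rule prod.cong) (use j in \<open>auto simp: HH_def power_add\<close>)
  also have "\<dots> = ((1/2)^c)^card A * (\<Prod>x\<in>A. (1/2)^(t x + 1))"
    by (simp only: prod.distrib prod_constant)
  also have "((1/2::real)^c)^card A = (1/2)^(card A * c)"
    by (simp add: power_mult[symmetric] mult.commute)
  finally have "(\<Prod>x\<in>A. (1/2::real)^(HH j A a c t x + 1)) = (1/2)^(card A * c) * (\<Prod>x\<in>A. (1/2)^(t x + 1))" .
  moreover have "HH j A a c t j = a" by (simp add: HH_def)
  ultimately show ?thesis using fin j s t by (simp add: pmf_DD)
qed

lemma measure_HH:
  assumes fin: "finite A" and j: "j \<notin> A"
  shows "measure (DD (insert j A)) (HH j A a c ` (E \<inter> supp A)) = (1/2::real)^(a+1) * (1/2)^(card A * c) * measure (DD A) E"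
proof -
  let ?K = "(1/2::real)^(a+1) * (1/2)^(card A * c)"
  have "measure (DD (insert j A)) (HH j A a c ` (E \<inter> supp A)) = infsetsum (pmf (DD (insert j A))) (HH j A a c ` (E \<inter> supp A))"
    by (rule measure_pmf_conv_infsetsum)
  also have "\<dots> = infsetsum (\<lambda>t. pmf (DD (insert j A)) (HH j A a c t)) (E \<inter> supp A)"
    by (rule infsetsum_reindex) (use inj_HH[OF j] in \<open>auto intro: inj_on_subset\<close>)
  also have "\<dots> = infsetsum (\<lambda>t. ?K * pmf (DD A) t) (E \<inter> supp A)"
    by (rule infsetsum_cong) (use pmf_DD_HH[OF fin j] in auto)
  also have "\<dots> = ?K * infsetsum (pmf (DD A)) (E \<inter> supp A)"
    by (rule infsetsum_cmult_right) auto
  also have "infsetsum (pmf (DD A)) (E \<inter> supp A) = measure (DD A) E"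
    using measure_DD_supp[OF fin, of E] by (simp add: measure_pmf_conv_infsetsum)
  finally show ?thesis .
qed


definition "dsj I (g::nat\<Rightarrow>nat) = {s::nat\<Rightarrow>nat. \<forall>i\<in>I. \<forall>k\<in>I. i \<noteq> k \<longrightarrow> s i + g i < s k \<or> s k + g k < s i}"

definition "BB I g j a = HH j (I-{j}) a (a + g j + 1) ` (dsj (I-{j}) g \<inter> supp (I-{j}))"

lemma decomp:
  assumes fin: "finite I" and ne: "I \<noteq> {}"
  shows "dsj I g \<inter> supp I = (\<Union>j\<in>I. \<Union>a. BB I g j a)"
proof
  show "(\<Union>j\<in>I. \<Union>a. BB I g j a) \<subseteq> dsj I g \<inter> supp I"
  proof (unfold BB_def, safe)
    fix j a t assume j: "j \<in> I" and t: "t \<in> dsj (I-{j}) g" "t \<in> supp (I-{j})"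
    show "HH j (I - {j}) a (a + g j + 1) t \<in> supp I" using j by (auto simp: HH_def supp_def)
    show "HH j (I - {j}) a (a + g j + 1) t \<in> dsj I g"
      using j t unfolding dsj_def HH_def by (auto; fastforce)
  qed
next
  show "dsj I g \<inter> supp I \<subseteq> (\<Union>j\<in>I. \<Union>a. BB I g j a)"
  proof
    fix s assume s: "s \<in> dsj I g \<inter> supp I"
    have "Min (s ` I) \<in> s ` I" using fin ne by (intro Min_in) auto
    then obtain j where j: "j \<in> I" "s j = Min (s ` I)" by auto
    define a where "a = s j"
    define c where "c = a + g j + 1"
    define t where "t = (\<lambda>i. if i \<in> I - {j} then s i - c else 0)"
    have ge: "s i \<ge> c" if "i \<in> I - {j}" for i
    proof -
      have "s j \<le> s i" using j that fin by auto
      moreover have "s i + g i < s j \<or> s j + g j < s i" using s that j(1) unfolding dsj_def by blast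
      ultimately show ?thesis unfolding c_def a_def by auto
    qed
    have "s = HH j (I-{j}) a c t"
    proof
      fix i show "s i = HH j (I-{j}) a c t i"
        using ge[of i] s by (auto simp: HH_def t_def a_def supp_def)
    qed
    moreover have "t \<in> supp (I-{j})" by (auto simp: t_def supp_def)
    moreover have "t \<in> dsj (I-{j}) g"
      unfolding dsj_def
    proof (intro CollectI ballI impI)
      fix i k assume ik: "i \<in> I - {j}" "k \<in> I - {j}" "i \<noteq> k"
      then have "s i + g i < s k \<or> s k + g k < s i" using s unfolding dsj_def by auto
      then show "t i + g i < t k \<or> t k + g k < t i" using ge[OF ik(1)] ge[OF ik(2)] ik
        by (auto simp: t_def)
    qed
    ultimately show "s \<in> (\<Union>j\<in>I. \<Union>a. BB I g j a)" using j(1)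
      unfolding BB_def c_def by blast
  qed
qed

lemma BB_j: "s \<in> BB I g j a \<Longrightarrow> s j = a"
  by (auto simp: BB_def HH_def)

lemma BB_other: "s \<in> BB I g j a \<Longrightarrow> i \<in> I \<Longrightarrow> i \<noteq> j \<Longrightarrow> s i > a"
  by (auto simp: BB_def HH_def)

lemma disj_BB1: "disjoint_family (BB I g j)"
  unfolding disjoint_family_on_def using BB_j by blast

lemma disj_BB2: "disjoint_family_on (\<lambda>j. \<Union>a. BB I g j a) I"
  unfolding disjoint_family_on_def
proof (intro ballI impI)
  fix j k assume jk: "j \<in> I" "k \<in> I" "j \<noteq> k"
  show "(\<Union>a. BB I g j a) \<inter> (\<Union>a. BB I g k a) = {}"
  proof (rule ccontr)
    assume "(\<Union>a. BB I g j a) \<inter> (\<Union>a. BB I g k a) \<noteq> {}"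
    then obtain s a b where "s \<in> BB I g j a" "s \<in> BB I g k b" by blast
    then show False using BB_j BB_other jk by (metis less_asym)
  qed
qed

lemma term_eq:
  "(1/2::real)^(a+1) * (1/2)^(m * (a + gj + 1)) = ((1/2)^(m+1))^a * ((1/2)^(m+1) * (1/2)^(m*gj))"
proof -
  have e: "a+1 + m*(a+gj+1) = (m+1)*a + ((m+1) + m*gj)" by (simp add: algebra_simps)
  have "(1/2::real)^(a+1) * (1/2)^(m * (a + gj + 1)) = (1/2)^(a+1 + m*(a+gj+1))" by (simp add: power_add)
  also have "\<dots> = (1/2)^((m+1)*a + ((m+1) + m*gj))" by (simp only: e)
  also have "\<dots> = ((1/2)^(m+1))^a * ((1/2)^(m+1) * (1/2)^(m*gj))" by (simp only: power_add power_mult)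
  finally show ?thesis .
qed

lemma recur:
  assumes fin: "finite I" and ne: "I \<noteq> {}"
  shows "measure (DD I) (dsj I g) = (\<Sum>j\<in>I. (1/2)^(card I) * (1/2)^((card I - 1) * g j) / (1 - (1/2)^(card I))
            * measure (DD (I-{j})) (dsj (I-{j}) g))"
proof -
  have "measure (DD I) (dsj I g) = measure (DD I) (\<Union>j\<in>I. \<Union>a. BB I g j a)"
    using measure_DD_supp[OF fin] decomp[OF fin ne] by metis
  also have "\<dots> = (\<Sum>j\<in>I. measure (DD I) (\<Union>a. BB I g j a))"
    by (rule measure_pmf.finite_measure_finite_Union) (use fin disj_BB2 in auto)
  also have "\<dots> = (\<Sum>j\<in>I. (1/2)^(card I) * (1/2)^((card I - 1) * g j) / (1 - (1/2)^(card I))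
            * measure (DD (I-{j})) (dsj (I-{j}) g))"
  proof (rule sum.cong[OF refl])
    fix j assume j: "j \<in> I"
    define m where "m = card I - 1"
    define P where "P = measure (DD (I-{j})) (dsj (I-{j}) g)"
    have cI: "card (I - {j}) = m" using j fin by (simp add: m_def)
    have Ij: "insert j (I - {j}) = I" using j by auto
    have mb: "measure (DD I) (BB I g j a) = ((1/2)^(m+1))^a * ((1/2)^(m+1) * (1/2)^(m*g j) * P)" for a
    proof -
      have "measure (DD I) (BB I g j a) = (1/2::real)^(a+1) * (1/2)^(m * (a + g j + 1)) * P"
        using measure_HH[of "I-{j}" j a "a + g j + 1" "dsj (I-{j}) g"] fin Ij cI
        unfolding BB_def P_def by simp
      then show ?thesis by (simp only: term_eq mult.assoc)
    qed
    have "(\<lambda>a. measure (DD I) (BB I g j a)) sums measure (DD I) (\<Union>a. BB I g j a)"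
      by (rule measure_pmf.finite_measure_UNION) (auto simp: disj_BB1)
    moreover have "(\<lambda>a. ((1/2::real)^(m+1))^a * ((1/2)^(m+1) * (1/2)^(m*g j) * P)) sums
        (1 / (1 - (1/2)^(m+1)) * ((1/2)^(m+1) * (1/2)^(m*g j) * P))"
      using power_le_one[of "1/2::real" m] by (intro sums_mult2 geometric_sums) auto
    ultimately have "measure (DD I) (\<Union>a. BB I g j a) = 1 / (1 - (1/2)^(m+1)) * ((1/2)^(m+1) * (1/2)^(m*g j) * P)"
      unfolding mb using sums_unique2 by blast
    also have "m + 1 = card I"
    proof -
      have "card I > 0" using j fin card_gt_0_iff by auto
      then show ?thesis unfolding m_def by simp
    qed
    finally show "measure (DD I) (\<Union>a. BB I g j a) = (1/2)^(card I) * (1/2)^((card I - 1) * g j) / (1 - (1/2)^(card I)) * P"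
      unfolding m_def by simp
  qed
  finally show ?thesis .
qed


fun Gl :: "(nat \<Rightarrow> nat) \<Rightarrow> nat list \<Rightarrow> real" where
  "Gl g [] = 1"
| "Gl g (x # xs) = (1/2)^(length xs * g x) * Gl g xs"

fun Cst :: "nat \<Rightarrow> real" where
  "Cst 0 = 1"
| "Cst (Suc n) = Cst n * (1/2)^(Suc n) / (1 - (1/2)^(Suc n))"

lemma perm_sum:
  assumes fin: "finite I" and ne: "I \<noteq> {}"
  shows "(\<Sum>xs\<in>permutations_of_set I. Gl g xs) =
         (\<Sum>j\<in>I. (1/2)^((card I - 1) * g j) * (\<Sum>xs\<in>permutations_of_set (I - {j}). Gl g xs))"
proof -
  have "(\<Sum>xs\<in>permutations_of_set I. Gl g xs) = (\<Sum>xs\<in>(\<Union>j\<in>I. (\<lambda>xs. j # xs) ` permutations_of_set (I - {j})). Gl g xs)"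
    using permutations_of_set_nonempty[OF ne] by simp
  also have "\<dots> = (\<Sum>j\<in>I. \<Sum>xs\<in>(\<lambda>xs. j # xs) ` permutations_of_set (I - {j}). Gl g xs)"
    by (rule sum.UNION_disjoint) (use fin in auto)
  also have "\<dots> = (\<Sum>j\<in>I. (1/2)^((card I - 1) * g j) * (\<Sum>xs\<in>permutations_of_set (I - {j}). Gl g xs))"
  proof (rule sum.cong[OF refl])
    fix j assume j: "j \<in> I"
    have "(\<Sum>xs\<in>(\<lambda>xs. j # xs) ` permutations_of_set (I - {j}). Gl g xs) = (\<Sum>xs\<in>permutations_of_set (I - {j}). Gl g (j # xs))"
      by (subst sum.reindex) (auto simp: inj_on_def)
    also have "\<dots> = (\<Sum>xs\<in>permutations_of_set (I - {j}). (1/2)^((card I - 1) * g j) * Gl g xs)"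
    proof (rule sum.cong[OF refl])
      fix xs assume "xs \<in> permutations_of_set (I - {j})"
      then have "length xs = card I - 1" using length_finite_permutations_of_set fin j by fastforce
      then show "Gl g (j # xs) = (1/2)^((card I - 1) * g j) * Gl g xs" by simp
    qed
    finally show "(\<Sum>xs\<in>(\<lambda>xs. j # xs) ` permutations_of_set (I - {j}). Gl g xs) = (1/2)^((card I - 1) * g j) * (\<Sum>xs\<in>permutations_of_set (I - {j}). Gl g xs)"
      by (simp add: sum_distrib_left)
  qed
  finally show ?thesis .
qed

lemma main:
  "finite I \<Longrightarrow> measure (DD I) (dsj I g) = Cst (card I) * (\<Sum>xs\<in>permutations_of_set I. Gl g xs)"
proof (induction "card I" arbitrary: I)
  case 0
  then have "I = {}" by simp
  then show ?case by (simp add: dsj_def)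
next
  case (Suc n)
  then have ne: "I \<noteq> {}" by auto
  have "measure (DD I) (dsj I g) = (\<Sum>j\<in>I. (1/2)^(card I) * (1/2)^((card I - 1) * g j) / (1 - (1/2)^(card I))
            * measure (DD (I-{j})) (dsj (I-{j}) g))"
    by (rule recur[OF Suc.prems ne])
  also have "\<dots> = (\<Sum>j\<in>I. Cst (Suc n) * ((1/2)^((card I - 1) * g j) * (\<Sum>xs\<in>permutations_of_set (I - {j}). Gl g xs)))"
  proof (rule sum.cong[OF refl])
    fix j assume j: "j \<in> I"
    have c: "card (I - {j}) = n" using Suc.hyps(2) Suc.prems j by simp
    have "measure (DD (I-{j})) (dsj (I-{j}) g) = Cst n * (\<Sum>xs\<in>permutations_of_set (I - {j}). Gl g xs)"
      using Suc.hyps(1)[of "I - {j}"] c Suc.prems by simp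
    then show "(1/2)^(card I) * (1/2)^((card I - 1) * g j) / (1 - (1/2)^(card I)) * measure (DD (I-{j})) (dsj (I-{j}) g)
       = Cst (Suc n) * ((1/2)^((card I - 1) * g j) * (\<Sum>xs\<in>permutations_of_set (I - {j}). Gl g xs))"
      using Suc.hyps(2)[symmetric] by simp
  qed
  also have "\<dots> = Cst (card I) * (\<Sum>xs\<in>permutations_of_set I. Gl g xs)"
    using perm_sum[OF Suc.prems ne, of g] Suc.hyps(2)[symmetric] by (simp add: sum_distrib_left)
  finally show ?case .
qed


lemma ivl_disj:
  "({real a..real a + real g} \<inter> {real b..real b + real h} = {}) \<longleftrightarrow> (a + g < b \<or> b + h < (a::nat))"
proof
  assume e: "{real a..real a + real g} \<inter> {real b..real b + real h} = {}"
  show "a + g < b \<or> b + h < a"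
  proof (rule ccontr)
    assume n: "\<not> (a + g < b \<or> b + h < a)"
    have "real (max a b) \<in> {real a..real a + real g} \<inter> {real b..real b + real h}"
      using n by (cases "a \<le> b") (auto simp: max_def)
    with e show False by auto
  qed
next
  assume "a + g < b \<or> b + h < a"
  then show "{real a..real a + real g} \<inter> {real b..real b + real h} = {}"
  proof
    assume "a + g < b"
    then have "real a + real g < real b" by (metis of_nat_add of_nat_less_iff)
    then show ?thesis by auto
  next
    assume "b + h < a"
    then have "real b + real h < real a" by (metis of_nat_add of_nat_less_iff)
    then show ?thesis by auto
  qed
qed

lemma event_A_eq: "event_A n g = dsj {1..n} g"
  unfolding event_A_def dsj_def ivl_disj by blast

lemma Gl_map: "Gl g (map f [a..<b]) = (\<Prod>i\<in>{a..<b}. (1/2)^((b - 1 - i) * g (f i)))"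
proof (induction "b - a" arbitrary: a)
  case 0 then show ?case by simp
next
  case (Suc k)
  then have ab: "a < b" by simp
  have "Gl g (map f [a..<b]) = (1/2)^((b - Suc a) * g (f a)) * Gl g (map f [Suc a..<b])"
    using ab by (simp add: upt_conv_Cons)
  also have "Gl g (map f [Suc a..<b]) = (\<Prod>i\<in>{Suc a..<b}. (1/2)^((b - 1 - i) * g (f i)))"
    using Suc by simp
  also have "(1/2::real)^((b - Suc a) * g (f a)) * (\<Prod>i\<in>{Suc a..<b}. (1/2)^((b - 1 - i) * g (f i)))
       = (\<Prod>i\<in>{a..<b}. (1/2)^((b - 1 - i) * g (f i)))"
    using ab by (simp add: prod.atLeast_Suc_lessThan)
  finally show ?case .
qed

lemma bij_perm:
  "bij_betw (\<lambda>\<sigma>. map \<sigma> [1..<Suc n]) {\<sigma>. \<sigma> permutes {1..n}} (permutations_of_set {1..n})"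
proof -
  have inj: "inj_on (\<lambda>\<sigma>. map \<sigma> [1..<Suc n]) {\<sigma>. \<sigma> permutes {1..n}}"
  proof
    fix \<sigma> \<tau> assume s: "\<sigma> \<in> {\<sigma>. \<sigma> permutes {1..n}}" and t: "\<tau> \<in> {\<sigma>. \<sigma> permutes {1..n}}"
      and e: "map \<sigma> [1..<Suc n] = map \<tau> [1..<Suc n]"
    show "\<sigma> = \<tau>"
    proof
      fix i show "\<sigma> i = \<tau> i"
      proof (cases "i \<in> {1..n}")
        case True then show ?thesis using e by (auto simp: map_eq_conv)
      next
        case False then show ?thesis using s t by (simp add: permutes_not_in)
      qed
    qed
  qed
  have sub: "(\<lambda>\<sigma>. map \<sigma> [1..<Suc n]) ` {\<sigma>. \<sigma> permutes {1..n}} \<subseteq> permutations_of_set {1..n}"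
  proof safe
    fix \<sigma> assume s: "\<sigma> permutes {1..n}"
    have st: "set [1..<Suc n] = {1..n}" by auto
    have "set (map \<sigma> [1..<Suc n]) = {1..n}"
      by (simp only: set_map st permutes_image[OF s])
    moreover have "distinct (map \<sigma> [1..<Suc n])"
      using permutes_inj_on[OF s] by (simp add: distinct_map inj_on_subset)
    ultimately show "map \<sigma> [1..<Suc n] \<in> permutations_of_set {1..n}" by (rule permutations_of_setI)
  qed
  have "card ((\<lambda>\<sigma>. map \<sigma> [1..<Suc n]) ` {\<sigma>. \<sigma> permutes {1..n}}) = card (permutations_of_set {1..n})"
    using card_image[OF inj] card_permutations[of "{1..n}" n] by simp
  then have "(\<lambda>\<sigma>. map \<sigma> [1..<Suc n]) ` {\<sigma>. \<sigma> permutes {1..n}} = permutations_of_set {1..n}"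
    using sub by (intro card_subset_eq) auto
  with inj show ?thesis unfolding bij_betw_def by auto
qed

lemma Cst_closed: "Cst n = (1/2)^(Suc n choose 2) / (\<Prod>m=1..n. (1 - (1/2::real)^m))"
proof (induction n)
  case 0 then show ?case by (simp add: numeral_2_eq_2)
next
  case (Suc n)
  have "(1/2::real)^(Suc n) \<le> 1/2" using power_le_one[of "1/2::real" n] by simp
  then have nz: "(1 - (1/2::real)^(Suc n)) \<noteq> 0" by linarith
  have ch: "Suc (Suc n) choose 2 = (Suc n choose 2) + Suc n"
    by (simp add: numeral_2_eq_2)
  show ?case using nz by (simp add: Suc prod.nat_ivl_Suc' ch power_add)
qed


theorem theorem2:
  fixes n :: nat and \<gamma> :: "nat \<Rightarrow> nat"
  assumes "n \<ge> 1"
  shows "measure_pmf.prob (iid_geom n) (event_A n \<gamma>) =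
    (1/2::real) ^ ((Suc n choose 2) - 1) / (\<Prod>i=1..n-1. (1 - (1/2::real) ^ (n + 1 - i)))
    * (\<Sum>\<sigma>\<in>{\<sigma>. \<sigma> permutes {1..n}}. \<Prod>i=1..n-1. (1/2::real) ^ ((n - i) * \<gamma> (\<sigma> i)))"
proof -
  have m: "measure_pmf.prob (iid_geom n) (event_A n \<gamma>) = Cst n * (\<Sum>xs\<in>permutations_of_set {1..n}. Gl \<gamma> xs)"
    using main[of "{1..n}" \<gamma>] by (simp add: iid_geom_def DD_def event_A_eq)
  have s: "(\<Sum>\<sigma>\<in>{\<sigma>. \<sigma> permutes {1..n}}. \<Prod>i=1..n-1. (1/2::real) ^ ((n - i) * \<gamma> (\<sigma> i)))
        = (\<Sum>xs\<in>permutations_of_set {1..n}. Gl \<gamma> xs)"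
  proof -
    have "(\<Sum>\<sigma>\<in>{\<sigma>. \<sigma> permutes {1..n}}. \<Prod>i=1..n-1. (1/2::real) ^ ((n - i) * \<gamma> (\<sigma> i)))
        = (\<Sum>\<sigma>\<in>{\<sigma>. \<sigma> permutes {1..n}}. Gl \<gamma> (map \<sigma> [1..<Suc n]))"
    proof (rule sum.cong[OF refl])
      fix \<sigma>
      have iv: "{1..<Suc n} = insert n {1..n-1}" using assms by auto
      have "Gl \<gamma> (map \<sigma> [1..<Suc n]) = (\<Prod>i\<in>{1..<Suc n}. (1/2::real)^((Suc n - 1 - i) * \<gamma> (\<sigma> i)))"
        by (rule Gl_map)
      also have "\<dots> = (\<Prod>i\<in>{1..n-1}. (1/2::real)^((Suc n - 1 - i) * \<gamma> (\<sigma> i)))"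
        unfolding iv using assms by (subst prod.insert) auto
      finally show "(\<Prod>i=1..n-1. (1/2::real) ^ ((n - i) * \<gamma> (\<sigma> i))) = Gl \<gamma> (map \<sigma> [1..<Suc n])"
        by simp
    qed
    also have "\<dots> = (\<Sum>xs\<in>permutations_of_set {1..n}. Gl \<gamma> xs)"
      by (rule sum.reindex_bij_betw[OF bij_perm])
    finally show ?thesis .
  qed
  have c: "Cst n = (1/2::real) ^ ((Suc n choose 2) - 1) / (\<Prod>i=1..n-1. (1 - (1/2::real) ^ (n + 1 - i)))"
  proof -
    define f where "f = (\<lambda>m::nat. 1 - (1/2::real)^m)"
    have p1: "(\<Prod>m=1..n. f m) = (1/2) * (\<Prod>m=2..n. f m)"
      using assms by (subst prod.atLeast_Suc_atMost) (auto simp: f_def numeral_2_eq_2)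
    have p2: "(\<Prod>i=1..n-1. f (n + 1 - i)) = (\<Prod>m=2..n. f m)"
      by (rule prod.reindex_bij_witness[of _ "\<lambda>m. n + 1 - m" "\<lambda>i. n + 1 - i"]) auto
    have C1: "Suc n choose 2 \<ge> 1" using assms by (simp add: numeral_2_eq_2)
    have pw: "(1/2::real)^(Suc n choose 2) = (1/2) * (1/2)^((Suc n choose 2) - 1)"
      using C1 by (metis Suc_diff_le diff_Suc_1 power_Suc)
    show ?thesis using Cst_closed[of n] p1 p2 pw unfolding f_def by simp
  qed
  show ?thesis using m s c by simp
qed

end
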